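(* Let $p,q$ be odd primes with $q-p=2$, let $\varepsilon\in\{1,-1\}$, let $D=D_1\cdots D_n$ ($n\ge 0$) be a product of distinct odd primes with $\gcd(pq,D)=1$, and let $E_D/\mathbb{Q}$ be the elliptic curve $y^2=x(x+\varepsilon pD)(x+\varepsilon qD)$. Then: (1) $E_D$ has good supersingular reduction at $3$ if $3\nmid pqD$; (2) $E_D$ has good ordinary reduction at $5$ if $5\nmid pqD$; (3) $E_D$ has good ordinary reduction at $7$ if $7\nmid pqD$ and $p\equiv 1,4\pmod 7$; (4) $E_D$ has good supersingular reduction at $7$ if $7\nmid pqD$ and $p\equiv 2,3,6\pmod 7$. *)

theory Defs
  imports Complex_Main "HOL-Computational_Algebra.Primes"
begin

text \<open>Long Weierstrass equations over the rationals:
  y^2 + a1 x y + a3 y = x^3 + a2 x^2 + a4 x + a6.\<close>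

datatype wcurve = W (a1: rat) (a2: rat) (a3: rat) (a4: rat) (a6: rat)

definition wdisc :: "wcurve \<Rightarrow> rat" where
  "wdisc E = (let b2 = a1 E ^ 2 + 4 * a2 E;
                  b4 = 2 * a4 E + a1 E * a3 E;
                  b6 = a3 E ^ 2 + 4 * a6 E;
                  b8 = a1 E ^ 2 * a6 E + 4 * a2 E * a6 E - a1 E * a3 E * a4 E
                       + a2 E * a3 E ^ 2 - a4 E ^ 2
              in - (b2 ^ 2) * b8 - 8 * b4 ^ 3 - 27 * b6 ^ 2 + 9 * b2 * b4 * b6)"

text \<open>E' is obtained from E by an admissible change of variables
  x = u^2 x' + r, y = u^3 y' + s u^2 x' + t over the rationals (Silverman, Table 3.1).\<close>
definition wiso :: "wcurve \<Rightarrow> wcurve \<Rightarrow> bool" where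
  "wiso E E' \<longleftrightarrow> (\<exists>u r s t :: rat. u \<noteq> 0 \<and>
      u * a1 E' = a1 E + 2 * s \<and>
      u ^ 2 * a2 E' = a2 E - s * a1 E + 3 * r - s ^ 2 \<and>
      u ^ 3 * a3 E' = a3 E + r * a1 E + 2 * t \<and>
      u ^ 4 * a4 E' = a4 E - s * a3 E + 2 * r * a2 E - (t + r * s) * a1 E + 3 * r ^ 2 - 2 * s * t \<and>
      u ^ 6 * a6 E' = a6 E + r * a4 E + r ^ 2 * a2 E + r ^ 3 - t * a3 E - t ^ 2 - r * t * a1 E)"

definition integral_model :: "wcurve \<Rightarrow> bool" where
  "integral_model E \<longleftrightarrow> a1 E \<in> \<int> \<and> a2 E \<in> \<int> \<and> a3 E \<in> \<int> \<and> a4 E \<in> \<int> \<and> a6 E \<in> \<int>"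

definition good_model_at :: "nat \<Rightarrow> wcurve \<Rightarrow> bool" where
  "good_model_at l E \<longleftrightarrow> integral_model E \<and> \<not> (int l dvd \<lfloor>wdisc E\<rfloor>)"

definition affine_pts_mod :: "nat \<Rightarrow> wcurve \<Rightarrow> (int \<times> int) set" where
  "affine_pts_mod l E = {(x, y). 0 \<le> x \<and> x < int l \<and> 0 \<le> y \<and> y < int l \<and>
      int l dvd (y ^ 2 + \<lfloor>a1 E\<rfloor> * x * y + \<lfloor>a3 E\<rfloor> * y
                 - x ^ 3 - \<lfloor>a2 E\<rfloor> * x ^ 2 - \<lfloor>a4 E\<rfloor> * x - \<lfloor>a6 E\<rfloor>)}"

text \<open>Trace of Frobenius a_l = l + 1 - #E~(F_l) (the point at infinity included).\<close>
definition trace_frob :: "nat \<Rightarrow> wcurve \<Rightarrow> int" where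
  "trace_frob l E = int l + 1 - (int (card (affine_pts_mod l E)) + 1)"

definition good_supersingular_at :: "nat \<Rightarrow> wcurve \<Rightarrow> bool" where
  "good_supersingular_at l E \<longleftrightarrow> prime l \<and>
     (\<exists>E'. wiso E E' \<and> good_model_at l E' \<and> int l dvd trace_frob l E')"

definition good_ordinary_at :: "nat \<Rightarrow> wcurve \<Rightarrow> bool" where
  "good_ordinary_at l E \<longleftrightarrow> prime l \<and>
     (\<exists>E'. wiso E E' \<and> good_model_at l E' \<and> \<not> int l dvd trace_frob l E')"

text \<open>E_D : y^2 = x (x + eps p D) (x + eps q D).\<close>
definition E_D :: "int \<Rightarrow> nat \<Rightarrow> nat \<Rightarrow> nat \<Rightarrow> wcurve" where
  "E_D \<epsilon> p q D = W 0 (of_int (\<epsilon> * (int p + int q) * int D)) 0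
                     (of_int (\<epsilon>^2 * int p * int q * int D ^ 2)) 0"

end

theory Submission
  imports Defs "HOL-Number_Theory.Cong"
begin

definition cnt :: "nat \<Rightarrow> int \<Rightarrow> int \<Rightarrow> nat" where
  "cnt l a b = length (filter (\<lambda>(x,y). (y^2 - x^3 - a*x^2 - b*x) mod int l = 0)
      (List.product [0..int l - 1] [0..int l - 1]))"

lemma wiso_refl: "wiso E E"
  unfolding wiso_def by (rule exI[of _ 1], rule exI[of _ 0], rule exI[of _ 0], rule exI[of _ 0]) simp

lemma pts_eq:
  assumes "l > 0"
  shows "affine_pts_mod l (W 0 (of_int A) 0 (of_int B) 0) =
    set (filter (\<lambda>(x,y). (y^2 - x^3 - (A mod int l)*x^2 - (B mod int l)*x) mod int l = 0)
      (List.product [0..int l - 1] [0..int l - 1]))"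
proof -
  have key: "(int l dvd (y^2 - x^3 - A*x^2 - B*x)) = ((y^2 - x^3 - (A mod int l)*x^2 - (B mod int l)*x) mod int l = 0)" for x y :: int
  proof -
    have d: "int l dvd ((y^2 - x^3 - A*x^2 - B*x) - (y^2 - x^3 - (A mod int l)*x^2 - (B mod int l)*x))"
    proof -
      have "(y^2 - x^3 - A*x^2 - B*x) - (y^2 - x^3 - (A mod int l)*x^2 - (B mod int l)*x)
          = - ((A - A mod int l) * x^2) - (B - B mod int l) * x" by (simp add: algebra_simps)
      moreover have "int l dvd (A - A mod int l)" "int l dvd (B - B mod int l)"
        by (simp_all add: mod_0_imp_dvd minus_mod_eq_mult_div)
      ultimately show ?thesis by (simp add: dvd_diff)
    qed
    have "int l dvd (y^2 - x^3 - A*x^2 - B*x) \<longleftrightarrow> int l dvd (y^2 - x^3 - (A mod int l)*x^2 - (B mod int l)*x)"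
      using d by (metis diff_add_cancel dvd_add_right_iff)
    then show ?thesis by (simp add: dvd_eq_mod_eq_0)
  qed
  show ?thesis
    unfolding affine_pts_mod_def set_filter set_product set_upto
  proof (intro set_eqI iffI)
    fix z assume "z \<in> {(x, y). 0 \<le> x \<and> x < int l \<and> 0 \<le> y \<and> y < int l \<and>
      int l dvd (y ^ 2 + \<lfloor>a1 (W 0 (of_int A) 0 (of_int B) 0)\<rfloor> * x * y + \<lfloor>a3 (W 0 (of_int A) 0 (of_int B) 0)\<rfloor> * y
                 - x ^ 3 - \<lfloor>a2 (W 0 (of_int A) 0 (of_int B) 0)\<rfloor> * x ^ 2 - \<lfloor>a4 (W 0 (of_int A) 0 (of_int B) 0)\<rfloor> * x - \<lfloor>a6 (W 0 (of_int A) 0 (of_int B) 0)\<rfloor>)}"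
    then obtain x y where z: "z = (x,y)" "0 \<le> x" "x < int l" "0 \<le> y" "y < int l"
       "int l dvd (y^2 - x^3 - A*x^2 - B*x)" by auto
    then show "z \<in> {z \<in> {0..int l - 1} \<times> {0..int l - 1}. case z of (x, y) \<Rightarrow> (y\<^sup>2 - x ^ 3 - A mod int l * x\<^sup>2 - B mod int l * x) mod int l = 0}"
      using key[of y x] by simp
  next
    fix z assume "z \<in> {z \<in> {0..int l - 1} \<times> {0..int l - 1}. case z of (x, y) \<Rightarrow> (y\<^sup>2 - x ^ 3 - A mod int l * x\<^sup>2 - B mod int l * x) mod int l = 0}"
    then obtain x y where z: "z = (x,y)" "0 \<le> x" "x < int l" "0 \<le> y" "y < int l"
       "(y\<^sup>2 - x ^ 3 - A mod int l * x\<^sup>2 - B mod int l * x) mod int l = 0" by auto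
    then show "z \<in> {(x, y). 0 \<le> x \<and> x < int l \<and> 0 \<le> y \<and> y < int l \<and>
      int l dvd (y ^ 2 + \<lfloor>a1 (W 0 (of_int A) 0 (of_int B) 0)\<rfloor> * x * y + \<lfloor>a3 (W 0 (of_int A) 0 (of_int B) 0)\<rfloor> * y
                 - x ^ 3 - \<lfloor>a2 (W 0 (of_int A) 0 (of_int B) 0)\<rfloor> * x ^ 2 - \<lfloor>a4 (W 0 (of_int A) 0 (of_int B) 0)\<rfloor> * x - \<lfloor>a6 (W 0 (of_int A) 0 (of_int B) 0)\<rfloor>)}"
      using key[of y x] by simp
  qed
qed

lemma card_pts:
  assumes "l > 0"
  shows "card (affine_pts_mod l (W 0 (of_int A) 0 (of_int B) 0)) = cnt l (A mod int l) (B mod int l)"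
proof -
  have "distinct (filter (\<lambda>(x,y). (y^2 - x^3 - (A mod int l)*x^2 - (B mod int l)*x) mod int l = 0)
      (List.product [0..int l - 1] [0..int l - 1]))"
    by (simp add: distinct_product)
  then show ?thesis unfolding pts_eq[OF assms] cnt_def by (rule distinct_card)
qed

lemma chk3: "\<forall>e\<in>{1,-1::int}. \<forall>dr\<in>{1,2::int}.
   3 dvd (3 - int (cnt 3 ((e*(2*2+2)*dr) mod 3) ((2*(2+2)*dr^2) mod 3)))"
  by code_simp

lemma chk5: "\<forall>e\<in>{1,-1::int}. \<forall>pr\<in>{1,2,4::int}. \<forall>dr\<in>{1,2,3,4::int}.
   \<not> 5 dvd (5 - int (cnt 5 ((e*(2*pr+2)*dr) mod 5) ((pr*(pr+2)*dr^2) mod 5)))"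
  by code_simp

lemma chk7: "\<forall>e\<in>{1,-1::int}. \<forall>pr\<in>{1,2,3,4,6::int}. \<forall>dr\<in>{1,2,3,4,5,6::int}.
   (pr \<in> {1,4} \<longrightarrow> \<not> 7 dvd (7 - int (cnt 7 ((e*(2*pr+2)*dr) mod 7) ((pr*(pr+2)*dr^2) mod 7))))
 \<and> (pr \<in> {2,3,6} \<longrightarrow> 7 dvd (7 - int (cnt 7 ((e*(2*pr+2)*dr) mod 7) ((pr*(pr+2)*dr^2) mod 7))))"
  by code_simp



lemma wdisc_W: "wdisc (W 0 a 0 b 0) = 16*b^2*(a^2-4*b)"
  by (simp add: wdisc_def Let_def power2_eq_square power3_eq_cube algebra_simps)

lemma disc_int:
  fixes e P Q Dz :: int
  assumes "e^2 = 1" "Q = P + 2"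
  shows "16*(e^2*P*Q*Dz^2)^2*((e*(P+Q)*Dz)^2 - 4*(e^2*P*Q*Dz^2)) = 64*P^2*Q^2*Dz^6"
  using assms by algebra

lemma disc_ED:
  assumes "\<epsilon> \<in> {1, -1}" "q = p + 2"
  shows "wdisc (E_D \<epsilon> p q D) = of_int (64 * (int p)^2 * (int q)^2 * (int D)^6)"
proof -
  have e2: "\<epsilon>^2 = 1" using assms by auto
  have "wdisc (E_D \<epsilon> p q D) = of_int (16*(\<epsilon>^2*int p*int q*int D^2)^2*((\<epsilon>*(int p+int q)*int D)^2 - 4*(\<epsilon>^2*int p*int q*int D^2)))"
    unfolding E_D_def wdisc_W by simp
  also have "\<dots> = of_int (64 * (int p)^2 * (int q)^2 * (int D)^6)"
  proof -
    have ieq: "16*(\<epsilon>^2*int p*int q*int D^2)^2*((\<epsilon>*(int p+int q)*int D)^2 - 4*(\<epsilon>^2*int p*int q*int D^2)) = 64 * (int p)^2 * (int q)^2 * (int D)^6"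
      by (rule disc_int[OF e2]) (simp add: assms(2))
    show ?thesis by (simp only: ieq)
  qed
  finally show ?thesis .
qed

lemma gen:
  assumes "prime l" "odd l" "\<not> l dvd p * q * D" "\<epsilon> \<in> {1, -1}" "q = p + 2"
  shows "good_model_at l (E_D \<epsilon> p q D) \<and>
    trace_frob l (E_D \<epsilon> p q D) = int l - int (cnt l ((\<epsilon>*(2*int p+2)*int D) mod int l)
                                              ((int p*(int p+2)*(int D)^2) mod int l))"
proof
  have e2: "\<epsilon>^2 = 1" using assms by auto
  have ED: "E_D \<epsilon> p q D = W 0 (of_int (\<epsilon>*(2*int p+2)*int D)) 0 (of_int (int p*(int p+2)*(int D)^2)) 0"
    unfolding E_D_def using assms(5) e2 by (simp add: algebra_simps)
  have l0: "l > 0" using assms(1) prime_gt_0_nat by blast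
  show "trace_frob l (E_D \<epsilon> p q D) = int l - int (cnt l ((\<epsilon>*(2*int p+2)*int D) mod int l)
                                              ((int p*(int p+2)*(int D)^2) mod int l))"
    unfolding trace_frob_def ED card_pts[OF l0] by simp
  have pz: "prime (int l)" using assms(1) by simp
  have nd: "\<not> int l dvd int p * int q * int D" using assms(3) by (metis of_nat_dvd_iff of_nat_mult)
  have n2: "\<not> int l dvd 64"
  proof
    assume "int l dvd 64"
    then have "int l dvd 2^6" by simp
    then have "int l dvd 2" using pz prime_dvd_power by blast
    then have "int l dvd int 2" by simp
    then have "l dvd 2" by (simp only: int_dvd_int_iff)
    then have "l \<le> 2" by (rule dvd_imp_le) simp
    moreover have "l \<ge> 2" using assms(1) by (rule prime_ge_2_nat)
    ultimately have "l = 2" by simp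
    then show False using assms(2) by simp
  qed
  have "\<not> int l dvd 64 * (int p)^2 * (int q)^2 * (int D)^6"
  proof
    assume h: "int l dvd 64 * (int p)^2 * (int q)^2 * (int D)^6"
    then have "int l dvd 64 \<or> int l dvd int p \<or> int l dvd int q \<or> int l dvd int D"
      using pz by (simp add: prime_dvd_mult_iff prime_dvd_power_iff)
    then show False using n2 nd by (meson dvd_mult dvd_mult2)
  qed
  then show "good_model_at l (E_D \<epsilon> p q D)"
    unfolding good_model_at_def integral_model_def disc_ED[OF assms(4,5)] floor_of_int
    by (simp add: E_D_def)
qed

lemma red:
  fixes e P Dz m :: int
  shows "(e*(2*P+2)*Dz) mod m = (e*(2*(P mod m)+2)*(Dz mod m)) mod m"
    and "(P*(P+2)*Dz^2) mod m = ((P mod m)*((P mod m)+2)*(Dz mod m)^2) mod m"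
proof -
  have c1: "[P mod m = P] (mod m)" "[Dz mod m = Dz] (mod m)" by (simp_all add: cong_def)
  have "[e*(2*(P mod m)+2)*(Dz mod m) = e*(2*P+2)*Dz] (mod m)"
    by (intro cong_mult cong_add cong_refl c1)
  then show "(e*(2*P+2)*Dz) mod m = (e*(2*(P mod m)+2)*(Dz mod m)) mod m"
    by (simp add: cong_def)
  have "[(P mod m)*((P mod m)+2)*(Dz mod m)^2 = P*(P+2)*Dz^2] (mod m)"
    by (intro cong_mult cong_add cong_refl c1 cong_pow)
  then show "(P*(P+2)*Dz^2) mod m = ((P mod m)*((P mod m)+2)*(Dz mod m)^2) mod m"
    by (simp add: cong_def)
qed

lemma ndvd3:
  assumes "\<not> (l::nat) dvd p * q * D"
  shows "\<not> int l dvd int p" "\<not> int l dvd int q" "\<not> int l dvd int D"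
proof -
  have "\<not> l dvd p" "\<not> l dvd q" "\<not> l dvd D" using assms by (auto intro: dvd_mult dvd_mult2)
  then show "\<not> int l dvd int p" "\<not> int l dvd int q" "\<not> int l dvd int D"
    by simp_all
qed

lemma res_cases:
  fixes x :: int and m :: int
  assumes "m > 0" "\<not> m dvd x"
  shows "0 < x mod m" "x mod m < m"
proof -
  have "x mod m \<noteq> 0" using assms(2) by (simp add: dvd_eq_mod_eq_0)
  moreover have "0 \<le> x mod m" using assms(1) by simp
  ultimately show "0 < x mod m" by simp
  show "x mod m < m" using assms(1) by simp
qed

lemma addmod: "((P::int) + 2) mod m = (P mod m + 2) mod m"
  by (simp add: mod_add_left_eq)

lemma r3: "0 < (r::int) \<Longrightarrow> r < 3 \<Longrightarrow> r = 1 \<or> r = 2" by presburger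
lemma r5: "0 < (r::int) \<Longrightarrow> r < 5 \<Longrightarrow> r = 1 \<or> r = 2 \<or> r = 3 \<or> r = 4" by presburger
lemma r7: "0 < (r::int) \<Longrightarrow> r < 7 \<Longrightarrow> r = 1 \<or> r = 2 \<or> r = 3 \<or> r = 4 \<or> r = 5 \<or> r = 6" by presburger

theorem corollary2p2:
  fixes p q :: nat and \<epsilon> :: int and Ds :: "nat list" and D :: nat
  assumes "prime p" and "odd p" and "prime q" and "odd q" and "q = p + 2"
    and "\<epsilon> \<in> {1, -1}"
    and "distinct Ds" and "\<forall>d\<in>set Ds. prime d \<and> odd d"
    and "D = prod_list Ds"
    and "gcd (p * q) D = 1"
  shows "(\<not> 3 dvd p * q * D \<longrightarrow> good_supersingular_at 3 (E_D \<epsilon> p q D))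
       \<and> (\<not> 5 dvd p * q * D \<longrightarrow> good_ordinary_at 5 (E_D \<epsilon> p q D))
       \<and> (\<not> 7 dvd p * q * D \<and> (p mod 7 = 1 \<or> p mod 7 = 4)
            \<longrightarrow> good_ordinary_at 7 (E_D \<epsilon> p q D))
       \<and> (\<not> 7 dvd p * q * D \<and> (p mod 7 = 2 \<or> p mod 7 = 3 \<or> p mod 7 = 6)
            \<longrightarrow> good_supersingular_at 7 (E_D \<epsilon> p q D))"
proof (intro conjI impI)
  define P where "P = int p"
  define Dz where "Dz = int D"
  have qP: "int q = P + 2" using assms(5) P_def by simp
  {
    assume h: "\<not> 3 dvd p * q * D"
    have g: "good_model_at 3 (E_D \<epsilon> p q D) \<and>
      trace_frob 3 (E_D \<epsilon> p q D) = 3 - int (cnt 3 ((\<epsilon>*(2*P+2)*Dz) mod 3) ((P*(P+2)*Dz^2) mod 3))"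
      using gen[of 3 p q D \<epsilon>] h assms(5,6) unfolding P_def Dz_def by simp
    have nd: "\<not> 3 dvd P" "\<not> (3::int) dvd P + 2" "\<not> 3 dvd Dz"
      using ndvd3[OF h] qP unfolding P_def Dz_def of_nat_numeral by simp_all
    have a: "0 < P mod 3" "P mod 3 < 3" "0 < Dz mod 3" "Dz mod 3 < 3"
      using res_cases[of 3 P, OF _ nd(1)] res_cases[of 3 Dz, OF _ nd(3)] by simp_all
    have "(P + 2) mod 3 \<noteq> 0" using nd(2) by (simp only: dvd_eq_mod_eq_0 not_False_eq_True)
    then have m2: "(P mod 3 + 2) mod 3 \<noteq> 0" using addmod[of P 3] by metis
    have nx: "P mod 3 \<noteq> 1"
    proof
      assume "P mod 3 = 1"
      then have "(P mod 3 + 2) mod 3 = 0" by (simp only:) simp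
      then show False using m2 by contradiction
    qed
    have "P mod 3 = 1 \<or> P mod 3 = 2" using r3 a(1,2) by blast
    then have pr: "P mod 3 = 2" using nx by blast
    have "Dz mod 3 = 1 \<or> Dz mod 3 = 2" using r3 a(3,4) by blast
    then have dr: "Dz mod 3 \<in> {1,2}" by blast
    have "3 dvd trace_frob 3 (E_D \<epsilon> p q D)"
      using g chk3[rule_format, OF assms(6) dr] unfolding red(1)[of _ P Dz 3] red(2)[of P Dz 3] pr by simp
    note t = this
    have pl: "prime (3::nat)" by simp
    show "good_supersingular_at 3 (E_D \<epsilon> p q D)"
      unfolding good_supersingular_at_def of_nat_numeral by (intro conjI pl exI[of _ "E_D \<epsilon> p q D"] wiso_refl conjunct1[OF g] t)
  }
  {
    assume h: "\<not> 5 dvd p * q * D"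
    have g: "good_model_at 5 (E_D \<epsilon> p q D) \<and>
      trace_frob 5 (E_D \<epsilon> p q D) = 5 - int (cnt 5 ((\<epsilon>*(2*P+2)*Dz) mod 5) ((P*(P+2)*Dz^2) mod 5))"
      using gen[of 5 p q D \<epsilon>] h assms(5,6) unfolding P_def Dz_def by simp
    have nd: "\<not> 5 dvd P" "\<not> (5::int) dvd P + 2" "\<not> 5 dvd Dz"
      using ndvd3[OF h] qP unfolding P_def Dz_def of_nat_numeral by simp_all
    have a: "0 < P mod 5" "P mod 5 < 5" "0 < Dz mod 5" "Dz mod 5 < 5"
      using res_cases[of 5 P, OF _ nd(1)] res_cases[of 5 Dz, OF _ nd(3)] by simp_all
    have "(P + 2) mod 5 \<noteq> 0" using nd(2) by (simp only: dvd_eq_mod_eq_0 not_False_eq_True)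
    then have m2: "(P mod 5 + 2) mod 5 \<noteq> 0" using addmod[of P 5] by metis
    have nx: "P mod 5 \<noteq> 3"
    proof
      assume "P mod 5 = 3"
      then have "(P mod 5 + 2) mod 5 = 0" by (simp only:) simp
      then show False using m2 by contradiction
    qed
    have "P mod 5 = 1 \<or> P mod 5 = 2 \<or> P mod 5 = 3 \<or> P mod 5 = 4" using r5 a(1,2) by blast
    then have pr: "P mod 5 \<in> {1,2,4}" using nx by blast
    have "Dz mod 5 = 1 \<or> Dz mod 5 = 2 \<or> Dz mod 5 = 3 \<or> Dz mod 5 = 4" using r5 a(3,4) by blast
    then have dr: "Dz mod 5 \<in> {1,2,3,4}" by blast
    have "\<not> 5 dvd trace_frob 5 (E_D \<epsilon> p q D)"
      using g chk5[rule_format, OF assms(6) pr dr] unfolding red(1)[of _ P Dz 5] red(2)[of P Dz 5] by simp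
    note t = this
    have pl: "prime (5::nat)" by simp
    show "good_ordinary_at 5 (E_D \<epsilon> p q D)"
      unfolding good_ordinary_at_def of_nat_numeral by (intro conjI pl exI[of _ "E_D \<epsilon> p q D"] wiso_refl conjunct1[OF g] t)
  }
  {
    assume h: "\<not> 7 dvd p * q * D \<and> (p mod 7 = 1 \<or> p mod 7 = 4)"
    have g: "good_model_at 7 (E_D \<epsilon> p q D) \<and>
      trace_frob 7 (E_D \<epsilon> p q D) = 7 - int (cnt 7 ((\<epsilon>*(2*P+2)*Dz) mod 7) ((P*(P+2)*Dz^2) mod 7))"
      using gen[of 7 p q D \<epsilon>] h assms(5,6) unfolding P_def Dz_def by simp
    have nd: "\<not> 7 dvd Dz"
      using ndvd3(3)[of 7 p q D] h unfolding Dz_def of_nat_numeral by simp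
    have a: "0 < Dz mod 7" "Dz mod 7 < 7"
      using res_cases[of 7 Dz, OF _ nd] by simp_all
    have "P mod 7 = int (p mod 7)" unfolding P_def by (simp add: zmod_int)
    then have pr: "P mod 7 \<in> {1,4}" using h by auto
    then have pr': "P mod 7 \<in> {1,2,3,4,6}" by auto
    have "Dz mod 7 = 1 \<or> Dz mod 7 = 2 \<or> Dz mod 7 = 3 \<or> Dz mod 7 = 4 \<or> Dz mod 7 = 5 \<or> Dz mod 7 = 6" using r7 a(1,2) by blast
    then have dr: "Dz mod 7 \<in> {1,2,3,4,5,6}" by blast
    have tr: "trace_frob 7 (E_D \<epsilon> p q D) = 7 - int (cnt 7 ((\<epsilon>*(2*(P mod 7)+2)*(Dz mod 7)) mod 7) (((P mod 7)*((P mod 7)+2)*(Dz mod 7)^2) mod 7))"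
      using conjunct2[OF g] unfolding red(1)[of _ P Dz 7] red(2)[of P Dz 7] .
    have "\<not> 7 dvd trace_frob 7 (E_D \<epsilon> p q D)"
      unfolding tr using conjunct1[OF chk7[rule_format, OF assms(6) pr' dr]] pr by blast
    note t = this
    have pl: "prime (7::nat)" by simp
    show "good_ordinary_at 7 (E_D \<epsilon> p q D)"
      unfolding good_ordinary_at_def of_nat_numeral by (intro conjI pl exI[of _ "E_D \<epsilon> p q D"] wiso_refl conjunct1[OF g] t)
  }
  {
    assume h: "\<not> 7 dvd p * q * D \<and> (p mod 7 = 2 \<or> p mod 7 = 3 \<or> p mod 7 = 6)"
    have g: "good_model_at 7 (E_D \<epsilon> p q D) \<and>
      trace_frob 7 (E_D \<epsilon> p q D) = 7 - int (cnt 7 ((\<epsilon>*(2*P+2)*Dz) mod 7) ((P*(P+2)*Dz^2) mod 7))"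
      using gen[of 7 p q D \<epsilon>] h assms(5,6) unfolding P_def Dz_def by simp
    have nd: "\<not> 7 dvd Dz"
      using ndvd3(3)[of 7 p q D] h unfolding Dz_def of_nat_numeral by simp
    have a: "0 < Dz mod 7" "Dz mod 7 < 7"
      using res_cases[of 7 Dz, OF _ nd] by simp_all
    have "P mod 7 = int (p mod 7)" unfolding P_def by (simp add: zmod_int)
    then have pr: "P mod 7 \<in> {2,3,6}" using h by auto
    then have pr': "P mod 7 \<in> {1,2,3,4,6}" by auto
    have "Dz mod 7 = 1 \<or> Dz mod 7 = 2 \<or> Dz mod 7 = 3 \<or> Dz mod 7 = 4 \<or> Dz mod 7 = 5 \<or> Dz mod 7 = 6" using r7 a(1,2) by blast
    then have dr: "Dz mod 7 \<in> {1,2,3,4,5,6}" by blast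
    have tr: "trace_frob 7 (E_D \<epsilon> p q D) = 7 - int (cnt 7 ((\<epsilon>*(2*(P mod 7)+2)*(Dz mod 7)) mod 7) (((P mod 7)*((P mod 7)+2)*(Dz mod 7)^2) mod 7))"
      using conjunct2[OF g] unfolding red(1)[of _ P Dz 7] red(2)[of P Dz 7] .
    have "7 dvd trace_frob 7 (E_D \<epsilon> p q D)"
      unfolding tr using conjunct2[OF chk7[rule_format, OF assms(6) pr' dr]] pr by blast
    note t = this
    have pl: "prime (7::nat)" by simp
    show "good_supersingular_at 7 (E_D \<epsilon> p q D)"
      unfolding good_supersingular_at_def of_nat_numeral by (intro conjI pl exI[of _ "E_D \<epsilon> p q D"] wiso_refl conjunct1[OF g] t)
  }
qed

end
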